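(* Let $G$ be a torsion-free abelian group, let $\mathfrak{F}$ be a set freely generating a free group $\langle\mathfrak{F}\rangle$, and let $\pi:\mathfrak{F}\to\mathrm{pAut}\,G$ be a map, extended to reduced words as follows: for a reduced word $\varphi=\varphi_1\cdots\varphi_n$ with $\varphi_i\in\mathfrak{F}\cup\mathfrak{F}^{-1}$ put $\pi(\varphi)=\pi(\varphi_1)\cdots\pi(\varphi_n)$ (composition of partial automorphisms, with $\pi(\psi^{-1})=\pi(\psi)^{-1}$ the weak inverse, and $\pi(1)=\mathrm{id}_G$ for the empty word). Then $\pi$ has the U-property if and only if every reduced $\varphi\in\langle\mathfrak{F}\rangle$ such that $x\pi(\varphi)=x$ for some $x\in\mathrm{Dom}\,\pi(\varphi)\cap{\mathfrak p}G$ satisfies $\varphi=1$.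
   Context: A partial automorphism of $G$ is an isomorphism $\varphi:\mathrm{Dom}\,\varphi\to\mathrm{Im}\,\varphi$ between subgroups of $G$, acting on the right; $\mathrm{pAut}\,G$ is the set of partial automorphisms with $G/\mathrm{Dom}\,\varphi$ and $G/\mathrm{Im}\,\varphi$ both $\aleph_1$-free (every countable subgroup free). Composition: $\mathrm{Dom}(\varphi\psi)=(\mathrm{Im}\,\varphi\cap\mathrm{Dom}\,\psi)\varphi^{-1}$, $x(\varphi\psi)=(x\varphi)\psi$; the weak inverse $\varphi^{-1}$ is the inverse isomorphism $\mathrm{Im}\,\varphi\to\mathrm{Dom}\,\varphi$. ${\mathfrak p}G$ is the set of nonzero $g\in G$ such that $nx=g$ has no solution $x\in G$ for any integer $n\ge2$. $\pi$ has the U-property if for all reduced $\varphi,\varphi'\in\langle\mathfrak{F}\rangle$ with $x\pi(\varphi)=x\pi(\varphi')$ for some $x\in\mathrm{Dom}\,\pi(\varphi)\cap\mathrm{Dom}\,\pi(\varphi')\cap{\mathfrak p}G$ we have $\varphi=\varphi'$. *)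

theory Defs
  imports "HOL-Algebra.Free_Abelian_Groups" "HOL-Library.Countable_Set"
begin

text \<open>The abelian group G is a HOL-Algebra commutative group, written multiplicatively:
  the additive n x of the paper is x [^] n, and 0 is the unit.\<close>

definition torsion_free :: "('g, 'b) monoid_scheme \<Rightarrow> bool" where
  "torsion_free G \<longleftrightarrow>
     (\<forall>x \<in> carrier G. \<forall>n::nat. n > 0 \<longrightarrow> x [^]\<^bsub>G\<^esub> n = \<one>\<^bsub>G\<^esub> \<longrightarrow> x = \<one>\<^bsub>G\<^esub>)"

text \<open>An abelian group A is free if it is isomorphic to a free abelian group on some set;
  the basis can be taken inside A itself, so its type is the element type of A.\<close>
definition free_abelian :: "('a, 'b) monoid_scheme \<Rightarrow> bool" where
  "free_abelian A \<longleftrightarrow> (\<exists>S :: 'a set. A \<cong> free_Abelian_group S)"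

definition aleph1_free :: "('a, 'b) monoid_scheme \<Rightarrow> bool" where
  "aleph1_free A \<longleftrightarrow>
     (\<forall>K. subgroup K A \<and> countable K \<longrightarrow> free_abelian (A\<lparr>carrier := K\<rparr>))"

type_synonym 'g pmap = "'g \<Rightarrow> 'g option"

definition partial_automorphism :: "('g, 'b) monoid_scheme \<Rightarrow> 'g pmap \<Rightarrow> bool" where
  "partial_automorphism G \<phi> \<longleftrightarrow>
     subgroup (dom \<phi>) G \<and> subgroup (ran \<phi>) G \<and> inj_on \<phi> (dom \<phi>) \<and>
     (\<forall>x \<in> dom \<phi>. \<forall>y \<in> dom \<phi>.
        the (\<phi> (x \<otimes>\<^bsub>G\<^esub> y)) = the (\<phi> x) \<otimes>\<^bsub>G\<^esub> the (\<phi> y))"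

definition pAut :: "('g, 'b) monoid_scheme \<Rightarrow> 'g pmap set" where
  "pAut G = {\<phi>. partial_automorphism G \<phi> \<and>
                 aleph1_free (G Mod (dom \<phi>)) \<and> aleph1_free (G Mod (ran \<phi>))}"

text \<open>Composition with right action: x(\<phi>\<psi>) = (x\<phi>)\<psi>.\<close>
definition pcomp :: "'g pmap \<Rightarrow> 'g pmap \<Rightarrow> 'g pmap" where
  "pcomp \<phi> \<psi> = (\<lambda>x. case \<phi> x of None \<Rightarrow> None | Some y \<Rightarrow> \<psi> y)"

definition pinv :: "'g pmap \<Rightarrow> 'g pmap" where
  "pinv \<phi> = (\<lambda>y. if y \<in> ran \<phi> then Some (THE x. \<phi> x = Some y) else None)"

definition pid :: "('g, 'b) monoid_scheme \<Rightarrow> 'g pmap" where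
  "pid G = (\<lambda>x. if x \<in> carrier G then Some x else None)"

definition pG :: "('g, 'b) monoid_scheme \<Rightarrow> 'g set" where
  "pG G = {g \<in> carrier G. g \<noteq> \<one>\<^bsub>G\<^esub> \<and>
             (\<forall>n::nat. n \<ge> 2 \<longrightarrow> \<not> (\<exists>x \<in> carrier G. x [^]\<^bsub>G\<^esub> n = g))}"

text \<open>Words in the free group on F: letters (f, True) = f, (f, False) = f^-1.
  Reduced words (no adjacent f f^-1 or f^-1 f) are exactly the elements of the free group;
  the identity 1 is the empty word.\<close>
definition reduced_word :: "'f set \<Rightarrow> ('f \<times> bool) list \<Rightarrow> bool" where
  "reduced_word F w \<longleftrightarrow> (\<forall>a \<in> set w. fst a \<in> F) \<and>
     (\<forall>i. Suc i < length w \<longrightarrow>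
        \<not> (fst (w ! i) = fst (w ! Suc i) \<and> snd (w ! i) \<noteq> snd (w ! Suc i)))"

definition letter_map :: "('f \<Rightarrow> 'g pmap) \<Rightarrow> 'f \<times> bool \<Rightarrow> 'g pmap" where
  "letter_map \<pi> a = (if snd a then \<pi> (fst a) else pinv (\<pi> (fst a)))"

fun word_map :: "('g, 'b) monoid_scheme \<Rightarrow> ('f \<Rightarrow> 'g pmap) \<Rightarrow> ('f \<times> bool) list \<Rightarrow> 'g pmap" where
  "word_map G \<pi> [] = pid G"
| "word_map G \<pi> [a] = letter_map \<pi> a"
| "word_map G \<pi> (a # w) = pcomp (letter_map \<pi> a) (word_map G \<pi> w)"

definition U_property :: "('g, 'b) monoid_scheme \<Rightarrow> 'f set \<Rightarrow> ('f \<Rightarrow> 'g pmap) \<Rightarrow> bool" where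
  "U_property G F \<pi> \<longleftrightarrow>
     (\<forall>\<phi> \<phi>'. reduced_word F \<phi> \<and> reduced_word F \<phi>' \<and>
        (\<exists>x \<in> dom (word_map G \<pi> \<phi>) \<inter> dom (word_map G \<pi> \<phi>') \<inter> pG G.
            word_map G \<pi> \<phi> x = word_map G \<pi> \<phi>' x) \<longrightarrow> \<phi> = \<phi>')"

end

theory Submission
  imports Defs
begin

definition nc :: "'f \<times> bool \<Rightarrow> 'f \<times> bool \<Rightarrow> bool" where
  "nc a b \<longleftrightarrow> \<not> (fst a = fst b \<and> snd a \<noteq> snd b)"

lemma reduced_alt: "reduced_word F w \<longleftrightarrow> (\<forall>a \<in> set w. fst a \<in> F) \<and> successively nc w"
  unfolding reduced_word_def successively_conv_nth nc_def by blast

definition flipl :: "'f \<times> bool \<Rightarrow> 'f \<times> bool" where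
  "flipl a = (fst a, \<not> snd a)"

definition inv_word :: "('f \<times> bool) list \<Rightarrow> ('f \<times> bool) list" where
  "inv_word w = rev (map flipl w)"

lemma reduced_inv: "reduced_word F w \<Longrightarrow> reduced_word F (inv_word w)"
  unfolding reduced_alt inv_word_def successively_rev successively_map
  by (auto simp: flipl_def nc_def elim!: successively_mono)

lemma reduced_app: "reduced_word F (u @ v) \<Longrightarrow> reduced_word F u"
  unfolding reduced_alt successively_append_iff by auto

context
  fixes G :: "('g, 'b) monoid_scheme" and F :: "'f set" and \<pi> :: "'f \<Rightarrow> 'g pmap"
  assumes cg: "comm_group G"
    and pa: "\<forall>f \<in> F. \<pi> f \<in> pAut G"
begin

lemma pa_props:
  assumes "f \<in> F"
  shows "dom (\<pi> f) \<subseteq> carrier G" "ran (\<pi> f) \<subseteq> carrier G" "inj_on (\<pi> f) (dom (\<pi> f))"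
proof -
  have "partial_automorphism G (\<pi> f)" using pa assms by (simp add: pAut_def)
  then have "subgroup (dom (\<pi> f)) G" "subgroup (ran (\<pi> f)) G" "inj_on (\<pi> f) (dom (\<pi> f))"
    unfolding partial_automorphism_def by auto
  then show "dom (\<pi> f) \<subseteq> carrier G" "ran (\<pi> f) \<subseteq> carrier G" "inj_on (\<pi> f) (dom (\<pi> f))"
    using subgroup.subset by blast+
qed

lemma pi_inj: "f \<in> F \<Longrightarrow> \<pi> f x = Some z \<Longrightarrow> \<pi> f x' = Some z \<Longrightarrow> x = x'"
  using pa_props(3)[of f] unfolding inj_on_def by (metis domI)

lemma pinv_Some: "pinv \<phi> y = Some x \<Longrightarrow> y \<in> ran \<phi> \<and> x = (THE x. \<phi> x = Some y)"
  unfolding pinv_def by (auto split: if_splits)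

lemma pinv_back:
  assumes "f \<in> F" "pinv (\<pi> f) y = Some x" shows "\<pi> f x = Some y"
proof -
  from pinv_Some[OF assms(2)] obtain x0 where x0: "\<pi> f x0 = Some y" and x: "x = (THE x. \<pi> f x = Some y)"
    unfolding ran_def by auto
  have "(THE x. \<pi> f x = Some y) = x0"
    by (rule the1_equality) (use x0 pi_inj[OF assms(1)] in blast)+
  with x x0 show ?thesis by simp
qed

lemma pinv_forw:
  assumes "f \<in> F" "\<pi> f x = Some y" shows "pinv (\<pi> f) y = Some x"
proof -
  have "(THE x'. \<pi> f x' = Some y) = x"
    by (rule the1_equality) (use assms pi_inj[OF assms(1)] in blast)+
  moreover have "y \<in> ran (\<pi> f)" using assms(2) by (auto simp: ran_def)
  ultimately show ?thesis unfolding pinv_def by simp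
qed

lemma letter_ran: "fst a \<in> F \<Longrightarrow> letter_map \<pi> a x = Some y \<Longrightarrow> y \<in> carrier G"
  unfolding letter_map_def
  using pa_props[of "fst a"]
  by (auto split: if_splits dest!: pinv_back simp: ranI domI subset_iff)

lemma letter_inj: "fst a \<in> F \<Longrightarrow> letter_map \<pi> a x = Some z \<Longrightarrow> letter_map \<pi> a x' = Some z \<Longrightarrow> x = x'"
  unfolding letter_map_def
proof (cases "snd a")
  case True
  assume "fst a \<in> F" "(if snd a then \<pi> (fst a) else pinv (\<pi> (fst a))) x = Some z"
    "(if snd a then \<pi> (fst a) else pinv (\<pi> (fst a))) x' = Some z"
  then show ?thesis using True pi_inj by auto
next
  case False
  assume "fst a \<in> F" "(if snd a then \<pi> (fst a) else pinv (\<pi> (fst a))) x = Some z"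
    "(if snd a then \<pi> (fst a) else pinv (\<pi> (fst a))) x' = Some z"
  then have "\<pi> (fst a) z = Some x" "\<pi> (fst a) z = Some x'" using False pinv_back[of "fst a" x z] pinv_back[of "fst a" x' z] by auto
  then show ?thesis by simp
qed

lemma letter_flip: "fst a \<in> F \<Longrightarrow> letter_map \<pi> a x = Some y \<Longrightarrow> letter_map \<pi> (flipl a) y = Some x"
  unfolding letter_map_def flipl_def
  by (auto split: if_splits dest: pinv_back pinv_forw)

abbreviation M where "M \<equiv> word_map G \<pi>"

lemma M_Cons: "fst a \<in> F \<Longrightarrow> M (a # w) x = pcomp (letter_map \<pi> a) (M w) x"
proof (cases w)
  case Nil
  assume "fst a \<in> F"
  then show ?thesis using Nil letter_ran[of a x]
    by (auto simp: pcomp_def pid_def split: option.splits)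
next
  case (Cons b v) then show ?thesis by simp
qed

lemma M_ran: "\<forall>a\<in>set w. fst a \<in> F \<Longrightarrow> M w x = Some y \<Longrightarrow> y \<in> carrier G"
proof (induction w arbitrary: x)
  case Nil then show ?case by (auto simp: pid_def split: if_splits)
next
  case (Cons a w)
  then show ?case using M_Cons[of a w x]
    by (auto simp: pcomp_def split: option.splits)
qed

lemma M_app: "\<forall>a\<in>set u. fst a \<in> F \<Longrightarrow> x \<in> carrier G \<Longrightarrow>
   M (u @ v) x = (case M u x of None \<Rightarrow> None | Some y \<Rightarrow> M v y)"
proof (induction u arbitrary: x)
  case Nil then show ?case by (simp add: pid_def)
next
  case (Cons a u)
  have "M ((a # u) @ v) x = pcomp (letter_map \<pi> a) (M (u @ v)) x"
    using Cons M_Cons[of a "u @ v" x] by simp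
  also have "\<dots> = (case M (a # u) x of None \<Rightarrow> None | Some y \<Rightarrow> M v y)"
    using Cons M_Cons[of a u x] letter_ran[of a x]
    by (auto simp: pcomp_def split: option.splits)
  finally show ?case .
qed

lemma M_inj: "\<forall>a\<in>set w. fst a \<in> F \<Longrightarrow> M w x = Some z \<Longrightarrow> M w x' = Some z \<Longrightarrow> x = x'"
proof (induction w arbitrary: x x')
  case Nil then show ?case by (auto simp: pid_def split: if_splits)
next
  case (Cons a w)
  then show ?case using M_Cons[of a w x] M_Cons[of a w x'] letter_inj[of a]
    by (auto simp: pcomp_def split: option.splits)
qed

lemma M_inv: "\<forall>a\<in>set w. fst a \<in> F \<Longrightarrow> M w x = Some y \<Longrightarrow> M (inv_word w) y = Some x"
proof (induction w arbitrary: x)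
  case Nil then show ?case by (auto simp: pid_def inv_word_def split: if_splits)
next
  case (Cons a w)
  then obtain z where z: "letter_map \<pi> a x = Some z" "M w z = Some y"
    using M_Cons[of a w x] by (auto simp: pcomp_def split: option.splits)
  have IH: "M (inv_word w) y = Some z" using Cons z by simp
  have yc: "y \<in> carrier G" using M_ran Cons z by auto
  have "inv_word (a # w) = inv_word w @ [flipl a]" by (simp add: inv_word_def)
  moreover have "\<forall>b\<in>set (inv_word w). fst b \<in> F" using Cons by (auto simp: inv_word_def flipl_def)
  ultimately have "M (inv_word (a # w)) y = M [flipl a] z"
    using M_app[OF _ yc, of "inv_word w" "[flipl a]"] IH by simp
  then show ?case using letter_flip[of a x z] z Cons by simp
qed

lemma main_red:
  assumes "reduced_word F \<phi>" "reduced_word F \<phi>'" "x \<in> carrier G"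
    "M \<phi> x = Some z" "M \<phi>' x = Some z"
    and fix0: "\<And>\<psi>. reduced_word F \<psi> \<Longrightarrow> M \<psi> x = Some x \<Longrightarrow> \<psi> = []"
  shows "\<phi> = \<phi>'"
  using assms(1,2,4,5)
proof (induction \<phi> arbitrary: \<phi>' z rule: rev_induct)
  case Nil
  have "M (Nil @ inv_word \<phi>') x = Some x"
    using M_inv[of \<phi>' x z] Nil assms(3) unfolding reduced_word_def
    by (auto simp: pid_def)
  then have "inv_word \<phi>' = []" using fix0 reduced_inv[OF Nil(2)] by simp
  then show ?case by (simp add: inv_word_def)
next
  case (snoc a \<phi>)
  have Fall: "\<forall>b\<in>set (\<phi> @ [a]). fst b \<in> F" "\<forall>b\<in>set \<phi>'. fst b \<in> F"
    using snoc unfolding reduced_word_def by auto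
  obtain y where y: "M \<phi> x = Some y" "M [a] y = Some z"
    using M_app[of \<phi> x "[a]"] Fall assms(3) snoc(4)
    by (auto split: option.splits)
  show ?case
  proof (cases "\<phi>' \<noteq> [] \<and> last \<phi>' = a")
    case True
    then obtain \<phi>'' where p: "\<phi>' = \<phi>'' @ [a]" by (metis append_butlast_last_id)
    obtain y' where y': "M \<phi>'' x = Some y'" "M [a] y' = Some z"
      using M_app[of \<phi>'' x "[a]"] Fall assms(3) snoc(5) p
      by (auto split: option.splits)
    have "y = y'" using M_inj[of "[a]" y z y'] y y' Fall by simp
    then have "\<phi> = \<phi>''"
      using snoc.IH[of \<phi>'' y] reduced_app snoc(2,3) p y y' by blast
    then show ?thesis using p by simp
  next
    case False
    let ?\<psi> = "(\<phi> @ [a]) @ inv_word \<phi>'"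
    have "reduced_word F ?\<psi>"
    proof (cases "\<phi>' = []")
      case True then show ?thesis using snoc(2) by (simp add: inv_word_def)
    next
      case ne: False
      then obtain u b where ub: "\<phi>' = u @ [b]" by (metis rev_exhaust)
      have "b \<noteq> a" using False ub by simp
      then have j: "nc a (flipl b)" unfolding nc_def flipl_def by (cases a; cases b) auto
      have hd: "hd (inv_word \<phi>') = flipl b" using ub by (simp add: inv_word_def)
      have ni: "inv_word \<phi>' \<noteq> []" using ne by (simp add: inv_word_def)
      show ?thesis
        using snoc(2) reduced_inv[OF snoc(3)] j hd ni
        unfolding reduced_alt successively_append_iff by auto
    qed
    moreover have "M ?\<psi> x = Some x"
      using M_app[of "\<phi> @ [a]" x "inv_word \<phi>'"] Fall assms(3) snoc(4)
        M_inv[OF Fall(2) snoc(5)] by simp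
    ultimately have "?\<psi> = []" by (rule fix0)
    then show ?thesis by simp
  qed
qed

end

theorem proposition3p10:
  fixes G :: "('g, 'b) monoid_scheme" and F :: "'f set" and \<pi> :: "'f \<Rightarrow> 'g pmap"
  assumes "comm_group G" and "torsion_free G"
    and "\<forall>f \<in> F. \<pi> f \<in> pAut G"
  shows "U_property G F \<pi> \<longleftrightarrow>
    (\<forall>\<phi>. reduced_word F \<phi> \<and>
        (\<exists>x \<in> dom (word_map G \<pi> \<phi>) \<inter> pG G. word_map G \<pi> \<phi> x = Some x) \<longrightarrow> \<phi> = [])"
proof
  assume U: "U_property G F \<pi>"
  show "\<forall>\<phi>. reduced_word F \<phi> \<and>
        (\<exists>x \<in> dom (word_map G \<pi> \<phi>) \<inter> pG G. word_map G \<pi> \<phi> x = Some x) \<longrightarrow> \<phi> = []"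
  proof (intro allI impI)
    fix \<phi> assume h: "reduced_word F \<phi> \<and>
        (\<exists>x \<in> dom (word_map G \<pi> \<phi>) \<inter> pG G. word_map G \<pi> \<phi> x = Some x)"
    then obtain x where x: "x \<in> dom (word_map G \<pi> \<phi>)" "x \<in> pG G" "word_map G \<pi> \<phi> x = Some x"
      by blast
    have xc: "x \<in> carrier G" using x(2) by (simp add: pG_def)
    have "reduced_word F []" by (simp add: reduced_word_def)
    moreover have "word_map G \<pi> [] x = Some x" using xc by (simp add: pid_def)
    ultimately show "\<phi> = []" using U h x unfolding U_property_def
      by (metis IntI domI)
  qed
next
  assume H: "\<forall>\<phi>. reduced_word F \<phi> \<and>
        (\<exists>x \<in> dom (word_map G \<pi> \<phi>) \<inter> pG G. word_map G \<pi> \<phi> x = Some x) \<longrightarrow> \<phi> = []"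
  show "U_property G F \<pi>"
    unfolding U_property_def
  proof (intro allI impI)
    fix \<phi> \<phi>' assume h: "reduced_word F \<phi> \<and> reduced_word F \<phi>' \<and>
        (\<exists>x \<in> dom (word_map G \<pi> \<phi>) \<inter> dom (word_map G \<pi> \<phi>') \<inter> pG G.
            word_map G \<pi> \<phi> x = word_map G \<pi> \<phi>' x)"
    then obtain x z where x: "x \<in> pG G" "word_map G \<pi> \<phi> x = Some z" "word_map G \<pi> \<phi>' x = Some z"
      by (metis IntE domD)
    have xc: "x \<in> carrier G" using x(1) by (simp add: pG_def)
    show "\<phi> = \<phi>'"
      using main_red[OF assms(1,3) _ _ xc x(2,3)] h H x(1) by blast
  qed
qed

end
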